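(* Let $X$ be a finite simplicial complex whose vertices carry a labelling by $\{1,\dots,n\}$, and suppose a second labelling is given; let $\sigma:\{1,\dots,n\}\to\{1,\dots,n\}$ be the permutation such that the vertex with label $i$ in the first labelling has label $\sigma(i)$ in the second. Let $B_d$ and $\tilde B_d$ be the matrices of the boundary maps induced by the first and second labelling, respectively. Then for all maps $F:C_d(X)\to C_d(X)$ and $H:C_{d-1}(X)\to C_{d-1}(X)$ that are componentwise with odd components, $$T_\sigma^{d-1}\circ B_dFB_d^\intercal=\tilde B_dF\tilde B_d^\intercal\circ T_\sigma^{d-1},\qquad T_\sigma^{d}\circ B_d^\intercal HB_d=\tilde B_d^\intercal H\tilde B_d\circ T_\sigma^{d}.$$ In particular, a different choice of labelling gives conjugate vector fields.
   Context: A finite simplicial complex $X$ on a vertex set is a collection of nonempty subsets of the vertex set closed under taking nonempty subsets; $X_d$ is the set of its simplices with $d+1$ vertices. $C_d(X)$ is the real vector space with basis $X_d$ (ordered in a fixed way, independent of labelling) and inner product making $X_d$ orthonormal. Given a labelling of the vertices by $\{1,\dots,n\}$, a $d$-simplex whose vertices have labels $i_0<\dots<i_d$ is written $[i_0,\dots,i_d]$, and the boundary map is $\partial_d[i_0,\dots,i_d]=\sum_{k=0}^d(-1)^k[i_0,\dots,\widehat{i_k},\dots,i_d]$ (label $i_k$ omitted); its matrix in the bases $X_d,X_{d-1}$ is the boundary matrix of that labelling. For a set $A=\{i_0<\dots<i_d\}\subseteq\{1,\dots,n\}$ and a permutation $\sigma$, $\operatorname{sgn}(A,\sigma)=\operatorname{sgn}(\tau)$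 where $\tau$ is the unique permutation of $\{0,\dots,d\}$ with $\sigma(i_{\tau(0)})<\dots<\sigma(i_{\tau(d)})$. $T_\sigma^d:C_d(X)\to C_d(X)$ is the diagonal linear map with $(T^d_\sigma x)_s=\operatorname{sgn}(A_s,\sigma)x_s$, where $A_s$ is the set of labels of $s$ in the first labelling. A map $F:C_d(X)\to C_d(X)$ is componentwise with odd components if $(F(x))_s=F_s(x_s)$ for each $s\in X_d$ with each $F_s:\mathbb{R}\to\mathbb{R}$ odd. *)

theory Defs
  imports Complex_Main "HOL-Combinatorics.Permutations"
begin

text \<open>Vertices are identified with their labels in the first labelling, so a
simplicial complex is a finite family of nonempty subsets of {1..n} closed
under nonempty subsets.\<close>

definition simplicial_complex :: "nat \<Rightarrow> nat set set \<Rightarrow> bool" where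
  "simplicial_complex n X \<longleftrightarrow> finite X \<and> (\<forall>s\<in>X. s \<noteq> {} \<and> s \<subseteq> {1..n}) \<and>
     (\<forall>s\<in>X. \<forall>t. t \<noteq> {} \<and> t \<subseteq> s \<longrightarrow> t \<in> X)"

definition faces :: "nat set set \<Rightarrow> nat \<Rightarrow> nat set set" where
  "faces X d = {s \<in> X. card s = d + 1}"

text \<open>Entry (t,s) of the boundary matrix for the labelling in which vertex v
(first label v) carries label f v: the coefficient of t in the boundary of s,
namely (-1)^k where k is the position (from 0) of the label of the omitted
vertex among the sorted labels of s.  f = id gives B_d, f = sigma gives the
matrix of the second labelling.\<close>
definition bdry_coef :: "(nat \<Rightarrow> nat) \<Rightarrow> nat set \<Rightarrow> nat set \<Rightarrow> real" where
  "bdry_coef f t s = (if t \<subseteq> s \<and> card (s - t) = 1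
      then (-1) ^ card {w \<in> s. f w < f (the_elem (s - t))} else 0)"

definition sgnA :: "nat set \<Rightarrow> (nat \<Rightarrow> nat) \<Rightarrow> real" where
  "sgnA A \<sigma> = (let xs = sorted_list_of_set A in
     of_int (sign (THE \<tau>. \<tau> permutes {0..<card A} \<and>
       (\<forall>j k. j < k \<and> k < card A \<longrightarrow> \<sigma> (xs ! (\<tau> j)) < \<sigma> (xs ! (\<tau> k))))))"

text \<open>Chains are functions on simplices (only values on X_d matter).\<close>
definition Tmap :: "(nat \<Rightarrow> nat) \<Rightarrow> (nat set \<Rightarrow> real) \<Rightarrow> nat set \<Rightarrow> real" where
  "Tmap \<sigma> x = (\<lambda>s. sgnA s \<sigma> * x s)"

text \<open>B_d F B_d^T for F componentwise with components Fc s, on C_{d-1}.\<close>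
definition op_down :: "nat set set \<Rightarrow> nat \<Rightarrow> (nat \<Rightarrow> nat) \<Rightarrow> (nat set \<Rightarrow> real \<Rightarrow> real)
    \<Rightarrow> (nat set \<Rightarrow> real) \<Rightarrow> nat set \<Rightarrow> real" where
  "op_down X d f Fc y = (\<lambda>t. \<Sum>s\<in>faces X d. bdry_coef f t s *
      Fc s (\<Sum>t'\<in>faces X (d - 1). bdry_coef f t' s * y t'))"

text \<open>B_d^T H B_d for H componentwise with components Hc t, on C_d.\<close>
definition op_up :: "nat set set \<Rightarrow> nat \<Rightarrow> (nat \<Rightarrow> nat) \<Rightarrow> (nat set \<Rightarrow> real \<Rightarrow> real)
    \<Rightarrow> (nat set \<Rightarrow> real) \<Rightarrow> nat set \<Rightarrow> real" where
  "op_up X d f Hc x = (\<lambda>s. \<Sum>t\<in>faces X (d - 1). bdry_coef f t s *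
      Hc t (\<Sum>s'\<in>faces X d. bdry_coef f t s' * x s'))"

end

theory Submission
  imports Defs
begin


definition valid :: "nat set \<Rightarrow> (nat\<Rightarrow>nat) \<Rightarrow> (nat\<Rightarrow>nat) \<Rightarrow> bool" where
 "valid s \<sigma> \<tau> \<longleftrightarrow> \<tau> permutes {0..<card s} \<and>
   (\<forall>j k. j < k \<and> k < card s \<longrightarrow> \<sigma> (sorted_list_of_set s ! (\<tau> j)) < \<sigma> (sorted_list_of_set s ! (\<tau> k)))"

lemma sgnA_valid: "sgnA s \<sigma> = of_int (sign (THE \<tau>. valid s \<sigma> \<tau>))"
  unfolding sgnA_def valid_def Let_def by simp

definition cyc :: "nat \<Rightarrow> nat \<Rightarrow> nat \<Rightarrow> nat" where
  "cyc k a i = (if i < a then i else if i < k then Suc i else if i = k then a else i)"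

lemma cyc_props: "a \<le> k \<Longrightarrow> cyc k a permutes {0..<Suc k} \<and> sign (cyc k a) = (-1) ^ (k - a)"
proof (induction "k - a" arbitrary: a)
  case 0
  then have ci: "cyc k a = id" by (auto simp: cyc_def fun_eq_iff)
  have P: "cyc k a permutes {0..<Suc k}" unfolding ci by (rule permutes_id)
  have s1: "sign (cyc k a) = (-1)^(k-a)" using 0 ci by simp
  show ?case using P s1 by blast
next
  case (Suc x)
  then have IH: "cyc k (Suc a) permutes {0..<Suc k} \<and> sign (cyc k (Suc a)) = (-1) ^ (k - Suc a)"
    by auto
  have eq: "cyc k a = transpose a (Suc a) \<circ> cyc k (Suc a)"
    using Suc.hyps(2) by (auto simp: cyc_def fun_eq_iff transpose_def)
  have tp: "transpose a (Suc a) permutes {0..<Suc k}" using Suc.hyps(2)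
    by (intro permutes_swap_id) auto
  have "permutation (cyc k (Suc a))" using IH permutation_permutes by blast
  moreover have "permutation (transpose a (Suc a))" using tp permutation_permutes by blast
  ultimately have "sign (cyc k a) = - sign (cyc k (Suc a))"
    unfolding eq by (simp add: sign_compose sign_swap_id)
  also have "\<dots> = (-1) ^ (k - a)" using IH Suc.hyps(2)
    by (simp add: Suc_diff_Suc[symmetric])
  finally show ?case using IH tp eq permutes_compose by metis
qed

lemma valid_unique:
  assumes "inj \<sigma>" "finite s" "valid s \<sigma> \<tau>1" "valid s \<sigma> \<tau>2"
  shows "\<tau>1 = \<tau>2"
proof -
  define xs where "xs = sorted_list_of_set s"
  define m where "m = card s"
  have lxs: "length xs = m" "distinct xs" using assms(2) by (auto simp: xs_def m_def)
  define h where "h i = \<sigma> (xs ! i)" for i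
  have p1: "\<tau>1 permutes {0..<m}" and p2: "\<tau>2 permutes {0..<m}"
    using assms(3,4) by (auto simp: valid_def m_def)
  have m1: "\<And>j k. j < k \<Longrightarrow> k < m \<Longrightarrow> h (\<tau>1 j) < h (\<tau>1 k)"
   and m2: "\<And>j k. j < k \<Longrightarrow> k < m \<Longrightarrow> h (\<tau>2 j) < h (\<tau>2 k)"
    using assms(3,4) unfolding valid_def m_def h_def xs_def by blast+
  have st1: "sorted_wrt (<) (map (h \<circ> \<tau>1) [0..<m])"
    unfolding sorted_wrt_iff_nth_less using m1 by simp
  have st2: "sorted_wrt (<) (map (h \<circ> \<tau>2) [0..<m])"
    unfolding sorted_wrt_iff_nth_less using m2 by simp
  have "set (map (h \<circ> \<tau>1) [0..<m]) = h ` {0..<m}"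
    proof -
    have "set (map (h \<circ> \<tau>1) [0..<m]) = h ` (\<tau>1 ` {0..<m})" by (simp only: set_map set_upt image_comp)
    then show ?thesis using permutes_image[OF p1] by simp
  qed
  moreover have "set (map (h \<circ> \<tau>2) [0..<m]) = h ` {0..<m}"
    proof -
    have "set (map (h \<circ> \<tau>2) [0..<m]) = h ` (\<tau>2 ` {0..<m})" by (simp only: set_map set_upt image_comp)
    then show ?thesis using permutes_image[OF p2] by simp
  qed
  ultimately have eq: "map (h \<circ> \<tau>1) [0..<m] = map (h \<circ> \<tau>2) [0..<m]"
    using st1 st2 unfolding strict_sorted_iff by (intro sorted_distinct_set_unique) auto
  have injh: "inj_on h {0..<m}"
    unfolding inj_on_def h_def using assms(1) lxs by (auto simp: inj_eq nth_eq_iff_index_eq)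
  show ?thesis
  proof
    fix j
    show "\<tau>1 j = \<tau>2 j"
    proof (cases "j < m")
      case True
      have "h (\<tau>1 j) = h (\<tau>2 j)" using eq True
        proof -
        have "\<forall>x\<in>{0..<m}. h (\<tau>1 x) = h (\<tau>2 x)" using eq by simp
        then show ?thesis using True by simp
      qed
      moreover have "\<tau>1 j \<in> {0..<m}" "\<tau>2 j \<in> {0..<m}"
        using permutes_in_image[OF p1, of j] permutes_in_image[OF p2, of j] True by auto
      ultimately show ?thesis using injh by (auto dest: inj_onD)
    next
      case False
      then show ?thesis using p1 p2 by (simp add: permutes_not_in)
    qed
  qed
qed




lemma SL:
  assumes "finite s" "v \<in> s"
  defines "xs \<equiv> sorted_list_of_set s" and "xt \<equiv> sorted_list_of_set (s - {v})"
    and "a \<equiv> card {w\<in>s. w < v}"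
  shows "a < card s" "xs ! a = v" "\<And>i. i < card s - 1 \<Longrightarrow> xt ! i = xs ! (cyc (card s - 1) a i)"
proof -
  have st: "sorted_wrt (<) xs" unfolding xs_def by (rule strict_sorted_list_of_set)
  have lx: "length xs = card s" "distinct xs" "set xs = s" using assms(1) by (auto simp: xs_def)
  obtain a' where a': "a' < length xs" "xs ! a' = v" using assms(2) lx by (metis in_set_conv_nth)
  have "{w\<in>s. w < v} = (nth xs) ` {..<a'}"
  proof (intro equalityI subsetI)
    fix w assume "w \<in> {w\<in>s. w < v}"
    then obtain i where i: "i < length xs" "xs ! i = w" "w < v" using lx by (auto simp: in_set_conv_nth)
    have "i < a'"
    proof (rule ccontr)
      assume "\<not> i < a'"
      then have "a' \<le> i" by simp
      then have "v \<le> w" using st i a' 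
        by (metis le_neq_implies_less order.strict_implies_order sorted_wrt_nth_less)
      then show False using i by simp
    qed
    then show "w \<in> (nth xs) ` {..<a'}" using i by auto
  next
    fix w assume "w \<in> (nth xs) ` {..<a'}"
    then obtain i where "i < a'" "w = xs ! i" by auto
    then show "w \<in> {w\<in>s. w < v}" using st a' lx
      by (metis (mono_tags, lifting) mem_Collect_eq nth_mem order.strict_trans sorted_wrt_nth_less)
  qed
  moreover have "inj_on (nth xs) {..<a'}" using lx a' by (intro inj_on_nth) auto
  ultimately have aa: "a = a'" unfolding a_def by (simp add: card_image)
  show "a < card s" "xs ! a = v" using aa a' lx by auto
  have "xt = remove1 v xs" unfolding xt_def xs_def using assms(1) by (simp add: sorted_list_of_set_remove)
  also have "xs = take a xs @ v # drop (Suc a) xs" using aa a' id_take_nth_drop by metis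
  finally have "xt = remove1 v (take a xs @ v # drop (Suc a) xs)" .
  moreover have "v \<notin> set (take a xs)" using aa a' lx
    by (metis \<open>xs = take a xs @ v # drop (Suc a) xs\<close> distinct_append not_distinct_conv_prefix) 
  ultimately have xt: "xt = take a xs @ drop (Suc a) xs" by (simp add: remove1_append)
  fix i assume i: "i < card s - 1"
  show "xt ! i = xs ! (cyc (card s - 1) a i)"
    using i aa a' lx unfolding xt by (auto simp: nth_append cyc_def min_def)
qed



lemma down_closed:
  fixes S :: "nat set"
  assumes "finite S" "\<forall>i\<in>S. \<forall>j<i. j \<in> S"
  shows "S = {..<card S}"
proof (cases "S = {}")
  case True then show ?thesis by simp
next
  case False
  define M where "M = Max S"
  have "M \<in> S" using False assms(1) by (simp add: M_def)
  have "S = {..M}"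
  proof
    show "S \<subseteq> {..M}" using assms(1) by (auto simp: M_def)
    show "{..M} \<subseteq> S" using assms(2) \<open>M \<in> S\<close> by (auto simp: le_less)
  qed
  then show ?thesis by (simp add: lessThan_Suc_atMost[symmetric])
qed

lemma construct:
  assumes inj: "inj \<sigma>" and fin: "finite s" and vs: "v \<in> s" and val: "valid (s - {v}) \<sigma> \<tau>'"
  defines "k \<equiv> card s - 1" and "a \<equiv> card {w\<in>s. w < v}" and "b \<equiv> card {w\<in>s. \<sigma> w < \<sigma> v}"
  shows "valid s \<sigma> (cyc k a \<circ> \<tau>' \<circ> inv (cyc k b)) \<and>
         sign (cyc k a \<circ> \<tau>' \<circ> inv (cyc k b)) = (-1)^(k-a) * sign \<tau>' * (-1)^(k-b)"
proof -
  define xs where "xs = sorted_list_of_set s"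
  define xt where "xt = sorted_list_of_set (s - {v})"
  define t where "t = s - {v}"
  have cs: "card s = Suc k" using fin vs unfolding k_def by (metis card_0_eq Suc_pred' empty_iff gr0I)
  have ct: "card t = k" using fin vs cs unfolding t_def by simp
  note sl = SL[OF fin vs, folded xs_def xt_def a_def, unfolded cs, simplified]
  have ak: "a \<le> k" using sl(1) by simp
  have "{w\<in>s. \<sigma> w < \<sigma> v} \<subseteq> t" unfolding t_def by auto
  then have bk: "b \<le> k" unfolding b_def using ct fin t_def by (metis card_mono finite_Diff)
  have ca: "cyc k a permutes {0..<Suc k}" "sign (cyc k a) = (-1)^(k-a)" using cyc_props[OF ak] by auto
  have cb: "cyc k b permutes {0..<Suc k}" "sign (cyc k b) = (-1)^(k-b)" using cyc_props[OF bk] by auto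
  have tp: "\<tau>' permutes {0..<k}" using val ct unfolding valid_def t_def by simp
  have tp': "\<tau>' permutes {0..<Suc k}" using tp by (rule permutes_subset) auto
  have gm: "\<And>j l. j < l \<Longrightarrow> l < k \<Longrightarrow> \<sigma> (xt ! (\<tau>' j)) < \<sigma> (xt ! (\<tau>' l))"
    using val ct unfolding valid_def t_def xt_def by blast
  define \<tau> where "\<tau> = cyc k a \<circ> \<tau>' \<circ> inv (cyc k b)"
  have perm: "\<tau> permutes {0..<Suc k}" unfolding \<tau>_def
    by (intro permutes_compose permutes_inv cb tp' ca)
  have sgn: "sign \<tau> = (-1)^(k-a) * sign \<tau>' * (-1)^(k-b)"
  proof -
    have p1: "permutation (cyc k a)" "permutation (cyc k b)" "permutation \<tau>'"
      using ca cb tp' permutation_permutes by blast+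
    have "permutation (inv (cyc k b))" using p1 by (simp add: permutation_inverse)
    then show ?thesis unfolding \<tau>_def using p1 ca cb
      by (simp add: sign_compose permutation_compose sign_inverse)
  qed
  have tv: "\<tau> (cyc k b i) = cyc k a (\<tau>' i)" for i
    unfolding \<tau>_def using permutes_inverses(2)[OF cb(1)] by simp
  have tpv: "i < k \<Longrightarrow> \<tau>' i < k" for i using permutes_in_image[OF tp, of i] by simp
  have tpk: "\<tau>' k = k" using tp by (simp add: permutes_not_in)
  define g where "g i = \<sigma> (xt ! (\<tau>' i))" for i
  have G1: "i < k \<Longrightarrow> \<sigma> (xs ! (\<tau> (cyc k b i))) = g i" for i
    unfolding tv g_def using sl(3)[OF tpv] by simp
  have G2: "\<sigma> (xs ! (\<tau> (cyc k b k))) = \<sigma> v"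
    unfolding tv tpk using sl(2) ak by (simp add: cyc_def)
  have gne: "g i \<noteq> \<sigma> v" if "i < k" for i
  proof -
    have "length xt = k" using ct fin by (simp add: xt_def t_def)
    then have "xt ! (\<tau>' i) \<in> set xt" using tpv[OF that] by (intro nth_mem) simp
    then have "xt ! (\<tau>' i) \<noteq> v" using fin by (simp add: xt_def)
    then show ?thesis unfolding g_def using inj by (simp add: inj_eq)
  qed
  have D: "i < k \<Longrightarrow> g i < \<sigma> v \<longleftrightarrow> i < b" for i
  proof -
    define S where "S = {i. i < k \<and> g i < \<sigma> v}"
    have "S = {..<card S}"
      by (rule down_closed) (auto simp: S_def g_def intro: gm order.strict_trans)
    moreover have "card S = b"
    proof -
      define \<phi> where "\<phi> i = xt ! (\<tau>' i)" for i
      have injphi: "inj_on \<phi> {..<k}"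
      proof
        fix i j assume "i \<in> {..<k}" "j \<in> {..<k}" "\<phi> i = \<phi> j"
        then have "\<tau>' i = \<tau>' j" unfolding \<phi>_def using tpv ct fin
          by (metis lessThan_iff distinct_sorted_list_of_set length_sorted_list_of_set nth_eq_iff_index_eq t_def xt_def)
        then show "i = j" using permutes_inj[OF tp] by (auto dest: injD)
      qed
      have img: "\<phi> ` {..<k} = t"
      proof -
        have "\<phi> ` {..<k} = (nth xt) ` (\<tau>' ` {0..<k})" unfolding \<phi>_def
          by (auto simp: image_iff atLeast0LessThan)
        also have "\<dots> = (nth xt) ` {0..<length xt}" using permutes_image[OF tp] ct fin
          by (simp add: xt_def t_def)
        also have "\<dots> = set xt" by (auto simp: set_conv_nth)
        also have "\<dots> = t" using fin by (simp add: xt_def t_def)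
        finally show ?thesis .
      qed
      have "\<phi> ` S = {w\<in>s. \<sigma> w < \<sigma> v}"
      proof -
        have "\<phi> ` S = {w \<in> \<phi> ` {..<k}. \<sigma> w < \<sigma> v}" unfolding S_def g_def \<phi>_def by auto
        also have "\<dots> = {w\<in>s. \<sigma> w < \<sigma> v}" unfolding img t_def by auto
        finally show ?thesis .
      qed
      moreover have "inj_on \<phi> S" using injphi by (rule inj_on_subset) (auto simp: S_def)
      ultimately show ?thesis unfolding b_def by (metis card_image)
    qed
    ultimately have "S = {..<b}" by simp
    moreover assume "i < k"
    ultimately show ?thesis unfolding S_def by blast
  qed
  have mono: "\<sigma> (xs ! (\<tau> j)) < \<sigma> (xs ! (\<tau> l))" if jl: "j < l" "l < Suc k" for j l
  proof -
    obtain i where i: "i < Suc k" "j = cyc k b i"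
      using permutes_surj[OF cb(1)] jl by (metis (full_types) atLeastLessThan_iff permutes_image[OF cb(1)] imageE zero_le order.strict_trans)
    obtain i' where i': "i' < Suc k" "l = cyc k b i'"
      using permutes_surj[OF cb(1)] jl by (metis (full_types) atLeastLessThan_iff permutes_image[OF cb(1)] imageE zero_le)
    show ?thesis
    proof (cases "i = k")
      case True
      then have "i' < k" using i i' jl by (metis less_antisym order.irrefl)
      then have "b \<le> i'" using i i' jl True bk by (auto simp: cyc_def split: if_splits)
      then show ?thesis using G1[OF \<open>i' < k\<close>] G2 D[OF \<open>i' < k\<close>] gne[OF \<open>i' < k\<close>] i i' True by auto
    next
      case False
      then have ik: "i < k" using i by simp
      show ?thesis
      proof (cases "i' = k")
        case True
        then have "i < b" using i i' jl ik bk by (auto simp: cyc_def split: if_splits)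
        then show ?thesis using G1[OF ik] G2 D[OF ik] i i' True by auto
      next
        case False
        then have ik': "i' < k" using i' by simp
        have "i < i'" using i i' jl ik ik' by (auto simp: cyc_def split: if_splits)
        then show ?thesis using G1[OF ik] G1[OF ik'] i i' ik' gm unfolding g_def by auto
      qed
    qed
  qed
  have "valid s \<sigma> \<tau>" unfolding valid_def cs using perm mono by (auto simp: xs_def)
  then show ?thesis using sgn unfolding \<tau>_def by simp
qed



lemma valid_exists: assumes inj: "inj \<sigma>" shows "finite s \<Longrightarrow> \<exists>\<tau>. valid s \<sigma> \<tau>"
proof (induction s rule: finite_induct)
  case empty
  have "id permutes {0..<card {}}" by (rule permutes_id)
  then show ?case by (auto simp: valid_def)
next
  case (insert x F)
  then obtain \<tau>' where "valid F \<sigma> \<tau>'" by blast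
  moreover have "insert x F - {x} = F" using insert by auto
  ultimately have "valid (insert x F - {x}) \<sigma> \<tau>'" by simp
  from construct[OF inj _ _ this] insert(1) show ?case by blast
qed

lemma sgnA_eq: "inj \<sigma> \<Longrightarrow> finite s \<Longrightarrow> valid s \<sigma> \<tau> \<Longrightarrow> sgnA s \<sigma> = of_int (sign \<tau>)"
  unfolding sgnA_valid using valid_unique by (metis the_equality)

lemma sgnA_pm: "sgnA s \<sigma> = 1 \<or> sgnA s \<sigma> = -1"
  unfolding sgnA_def Let_def sign_def by auto

lemma sgnA_sq: "sgnA s \<sigma> * sgnA s \<sigma> = 1"
  using sgnA_pm[of s \<sigma>] by auto

lemma key:
  assumes inj: "inj \<sigma>" and fin: "finite s" and vs: "v \<in> s"
  shows "sgnA s \<sigma> * sgnA (s - {v}) \<sigma> = (-1) ^ (card {w\<in>s. w < v} + card {w\<in>s. \<sigma> w < \<sigma> v})"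
proof -
  define k where "k = card s - 1"
  define a where "a = card {w\<in>s. w < v}"
  define b where "b = card {w\<in>s. \<sigma> w < \<sigma> v}"
  obtain \<tau>' where v': "valid (s - {v}) \<sigma> \<tau>'" using valid_exists[OF inj] fin by blast
  note c = construct[OF inj fin vs v', folded k_def a_def b_def]
  have s1: "sgnA (s - {v}) \<sigma> = of_int (sign \<tau>')" using sgnA_eq[OF inj _ v'] fin by simp
  have s2: "sgnA s \<sigma> = (-1)^(k-a) * of_int (sign \<tau>') * (-1)^(k-b)"
    using sgnA_eq[OF inj fin conjunct1[OF c]] conjunct2[OF c] by simp
  have cs: "card s = Suc k" using fin vs unfolding k_def by (metis card_0_eq Suc_pred' empty_iff gr0I)
  have ak: "a \<le> k" using SL(1)[OF fin vs] cs unfolding a_def by simp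
  have "{w\<in>s. \<sigma> w < \<sigma> v} \<subseteq> s - {v}" by auto
  then have "b \<le> card (s - {v})" unfolding b_def using fin by (metis card_mono finite_Diff)
  then have bk: "b \<le> k" using fin vs cs by simp
  have sq: "(of_int (sign \<tau>') :: real) * of_int (sign \<tau>') = 1" by (simp add: sign_def)
  have "((-1::real)^(k-a) * (-1)^(k-b)) = (-1)^(a+b)"
  proof -
    have "((-1::real)^(k-a) * (-1)^(k-b)) * ((-1)^a * (-1)^b) = (-1)^k * (-1)^k"
      using ak bk by (simp add: power_add[symmetric] algebra_simps)
    also have "\<dots> = 1" by (simp add: power_add[symmetric] mult_2[symmetric] power_mult)
    finally have e: "((-1::real)^(k-a) * (-1)^(k-b)) * (-1)^(a+b) = 1" by (simp add: power_add)
    have "((-1::real)^(a+b)) * (-1)^(a+b) = 1" by (simp add: power_add[symmetric] mult_2[symmetric] power_mult)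
    with e show ?thesis by (metis mult.commute mult_cancel_right mult_cancel_left1 mult.assoc one_neq_zero)
  qed
  then show ?thesis unfolding s1 s2 a_def[symmetric] b_def[symmetric]
    by (metis (no_types, lifting) mult.assoc mult.commute mult.left_commute mult_1 sq)
qed

lemma bdry:
  assumes inj: "inj \<sigma>" and fin: "finite s"
  shows "bdry_coef \<sigma> t s = sgnA s \<sigma> * sgnA t \<sigma> * bdry_coef id t s"
proof (cases "t \<subseteq> s \<and> card (s - t) = 1")
  case True
  then obtain v where v: "s - t = {v}" by (metis card_1_singletonE)
  then have vs: "v \<in> s" and tt: "t = s - {v}" using True by auto
  have "bdry_coef \<sigma> t s = (-1) ^ card {w \<in> s. \<sigma> w < \<sigma> v}"
    unfolding bdry_coef_def using True v by simp
  moreover have "bdry_coef id t s = (-1) ^ card {w \<in> s. w < v}"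
    unfolding bdry_coef_def using True v by simp
  moreover have "sgnA s \<sigma> * sgnA t \<sigma> = (-1) ^ (card {w\<in>s. w < v} + card {w\<in>s. \<sigma> w < \<sigma> v})"
    unfolding tt by (rule key[OF inj fin vs])
  ultimately show ?thesis by (simp add: power_add)
next
  case False
  then show ?thesis unfolding bdry_coef_def by auto
qed



lemma odd_scale:
  assumes "\<forall>r. F (- r) = - F r"
  shows "F (sgnA s \<sigma> * r) = sgnA s \<sigma> * F r"
  using sgnA_pm[of s \<sigma>] assms by auto

lemma h1: "(c::real) * c = 1 \<Longrightarrow> a * c * b * (c * y) = a * (b * y)"
proof -
  assume "c * c = 1"
  moreover have "a * c * b * (c * y) = a * (b * y) * (c * c)" by (simp add: mult_ac)
  ultimately show ?thesis by simp
qed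

lemma h2: "(a::real) * a = 1 \<Longrightarrow> a * c * b * (a * f) = c * (b * f)"
proof -
  assume "a * a = 1"
  moreover have "a * c * b * (a * f) = c * (b * f) * (a * a)" by (simp add: mult_ac)
  ultimately show ?thesis by simp
qed

theorem mainTheorem2:
  fixes n d :: nat and X :: "nat set set" and \<sigma> :: "nat \<Rightarrow> nat"
    and Fc Hc :: "nat set \<Rightarrow> real \<Rightarrow> real"
  assumes "simplicial_complex n X"
    and "\<sigma> permutes {1..n}"
    and "\<forall>s\<in>faces X d. \<forall>r. Fc s (- r) = - Fc s r"
    and "\<forall>t\<in>faces X (d - 1). \<forall>r. Hc t (- r) = - Hc t r"
  shows "(\<forall>y. \<forall>t\<in>faces X (d - 1).
            Tmap \<sigma> (op_down X d id Fc y) t = op_down X d \<sigma> Fc (Tmap \<sigma> y) t) \<and>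
         (\<forall>x. \<forall>s\<in>faces X d.
            Tmap \<sigma> (op_up X d id Hc x) s = op_up X d \<sigma> Hc (Tmap \<sigma> x) s)"
proof -
  have inj: "inj \<sigma>" using assms(2) by (rule permutes_inj)
  have finX: "\<And>s. s \<in> X \<Longrightarrow> finite s" using assms(1) unfolding simplicial_complex_def
    by (meson finite_atLeastAtMost finite_subset)
  have fin: "\<And>s e. s \<in> faces X e \<Longrightarrow> finite s" using finX by (auto simp: faces_def)
  note bd = bdry[OF inj]
  have P1: "Tmap \<sigma> (op_down X d id Fc y) t = op_down X d \<sigma> Fc (Tmap \<sigma> y) t"
    if t: "t \<in> faces X (d - 1)" for y t
  proof -
    have trm: "bdry_coef \<sigma> t s * Fc s (\<Sum>t'\<in>faces X (d - 1). bdry_coef \<sigma> t' s * (sgnA t' \<sigma> * y t'))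
       = sgnA t \<sigma> * (bdry_coef id t s * Fc s (\<Sum>t'\<in>faces X (d - 1). bdry_coef id t' s * y t'))"
      if s: "s \<in> faces X d" for s
    proof -
      have "(\<Sum>t'\<in>faces X (d - 1). bdry_coef \<sigma> t' s * (sgnA t' \<sigma> * y t'))
          = (\<Sum>t'\<in>faces X (d - 1). sgnA s \<sigma> * (bdry_coef id t' s * y t'))"
      proof (rule sum.cong[OF refl])
        fix t' show "bdry_coef \<sigma> t' s * (sgnA t' \<sigma> * y t') = sgnA s \<sigma> * (bdry_coef id t' s * y t')"
          unfolding bd[OF fin[OF s]]
          by (rule h1[OF sgnA_sq])
      qed
      also have "\<dots> = sgnA s \<sigma> * (\<Sum>t'\<in>faces X (d - 1). bdry_coef id t' s * y t')"
        by (simp add: sum_distrib_left)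
      finally have e: "(\<Sum>t'\<in>faces X (d - 1). bdry_coef \<sigma> t' s * (sgnA t' \<sigma> * y t')) = \<dots>" .
      have od: "\<forall>r. Fc s (- r) = - Fc s r" using assms(3) s by blast
      show ?thesis unfolding e odd_scale[OF od] bd[OF fin[OF s], of t]
        by (rule h2[OF sgnA_sq])
    qed
    show ?thesis unfolding Tmap_def op_down_def sum_distrib_left
      by (intro sum.cong refl, rule trm[symmetric], assumption)
  qed
  have P2: "Tmap \<sigma> (op_up X d id Hc x) s = op_up X d \<sigma> Hc (Tmap \<sigma> x) s"
    if s: "s \<in> faces X d" for x s
  proof -
    have trm: "bdry_coef \<sigma> t s * Hc t (\<Sum>s'\<in>faces X d. bdry_coef \<sigma> t s' * (sgnA s' \<sigma> * x s'))
       = sgnA s \<sigma> * (bdry_coef id t s * Hc t (\<Sum>s'\<in>faces X d. bdry_coef id t s' * x s'))"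
      if t: "t \<in> faces X (d - 1)" for t
    proof -
      have "(\<Sum>s'\<in>faces X d. bdry_coef \<sigma> t s' * (sgnA s' \<sigma> * x s'))
          = (\<Sum>s'\<in>faces X d. sgnA t \<sigma> * (bdry_coef id t s' * x s'))"
      proof (rule sum.cong[OF refl])
        fix s' assume s': "s' \<in> faces X d"
        show "bdry_coef \<sigma> t s' * (sgnA s' \<sigma> * x s') = sgnA t \<sigma> * (bdry_coef id t s' * x s')"
          unfolding bd[OF fin[OF s']]
          by (rule h2[OF sgnA_sq])
      qed
      also have "\<dots> = sgnA t \<sigma> * (\<Sum>s'\<in>faces X d. bdry_coef id t s' * x s')"
        by (simp add: sum_distrib_left)
      finally have e: "(\<Sum>s'\<in>faces X d. bdry_coef \<sigma> t s' * (sgnA s' \<sigma> * x s')) = \<dots>" .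
      have od: "\<forall>r. Hc t (- r) = - Hc t r" using assms(4) t by blast
      show ?thesis unfolding e odd_scale[OF od] bd[OF fin[OF s], of t]
        by (rule h1[OF sgnA_sq])
    qed
    show ?thesis unfolding Tmap_def op_up_def sum_distrib_left
      by (intro sum.cong refl, rule trm[symmetric], assumption)
  qed
  show ?thesis using P1 P2 by blast
qed

end
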